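(* In the single-node mining process with $\phi(s)=\log_2 s$ and $R\ge2$, the expected total number of hash attempts needed for the node to build a block-chain of length $L\ge1$ is at most $$D_s\sum_{n=0}^{L-1}\frac{1}{\log_2(n+1)+\log_2R}.$$
   Context: Fix real parameters $M>0$ (scale of the system), $R\ge 2$ (the stake reward StakRwd), $0<D_c\le D_s$ (coin-issue difficulty constant CoinD and stake-issue difficulty constant StakD). Put $p=D_c/D_s$, $q=1-p$. Single-node mining process with threshold function $\phi$: a node, who makes no stake transactions with anybody, starts with stake $S_0=0$. For $n=0,1,2,\dots$ the $(n+1)$-th block is produced as follows: the node makes successive hash attempts, each producing a hash value uniformly distributed on $[0,M]$, independent of all previous randomness; the block is created at the first attempt whose hash $h$ satisfies $h\le M\phi(R+S_n)/D_c$ (the coin-issue threshold), and then $S_{n+1}=S_n+R$ if moreover $h\le M\phi(R+S_n)/D_s$ (the stake-issue threshold), otherwise $S_{n+1}=S_n$. Assume $0<\phi(R+S)\le D_c$ for all $S\in\{0,R,2R,\dots,(L-1)R\}$. Time is measured as the total number of hash attempts. In this statement $\phi(s)=\log_2 s$ (logarithmic stake system). *)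

theory Defs
  imports "HOL-Probability.Probability"
begin

text \<open>A run is determined by the sequence h of hash values (h i is the hash of attempt i).
  mining_state phi M R Dc Ds h i = (number of blocks built, current stake) after i attempts.\<close>

fun mining_state ::
  "(real \<Rightarrow> real) \<Rightarrow> real \<Rightarrow> real \<Rightarrow> real \<Rightarrow> real \<Rightarrow> (nat \<Rightarrow> real) \<Rightarrow> nat \<Rightarrow> nat \<times> real" where
  "mining_state phi M R Dc Ds h 0 = (0, 0)"
| "mining_state phi M R Dc Ds h (Suc i) =
     (let (n, S) = mining_state phi M R Dc Ds h i in
      if h i \<le> M * phi (R + S) / Dc
      then (Suc n, if h i \<le> M * phi (R + S) / Ds then S + R else S)
      else (n, S))"

definition mining_time ::
  "(real \<Rightarrow> real) \<Rightarrow> real \<Rightarrow> real \<Rightarrow> real \<Rightarrow> real \<Rightarrow> nat \<Rightarrow> (nat \<Rightarrow> real) \<Rightarrow> ennreal" where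
  "mining_time phi M R Dc Ds L h =
     (if \<exists>i. L \<le> fst (mining_state phi M R Dc Ds h i)
      then of_nat (LEAST i. L \<le> fst (mining_state phi M R Dc Ds h i))
      else \<infinity>)"

definition hash_space :: "real \<Rightarrow> (nat \<Rightarrow> real) measure" where
  "hash_space M = PiM UNIV (\<lambda>_. uniform_measure lborel {0..M})"

end

theory Submission
  imports Defs
begin


lemma U_prob: "(M::real) > 0 \<Longrightarrow> prob_space (uniform_measure lborel {0..M})"
  by (intro prob_space_uniform_measure) auto

lemma decomp:
  assumes M: "M > 0" and f[measurable]: "f \<in> borel_measurable (hash_space M)"
  shows "(\<integral>\<^sup>+h. f h \<partial>hash_space M) =
     (\<integral>\<^sup>+x. (\<integral>\<^sup>+h. f (case_nat x h) \<partial>hash_space M) \<partial>uniform_measure lborel {0..M})"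
proof -
  let ?U = "uniform_measure lborel {0..M}"
  interpret U: prob_space ?U using U_prob[OF M] .
  interpret S: sequence_space ?U by unfold_locales
  interpret PP: prob_space "PiM UNIV (\<lambda>_. ?U)" by (rule prob_space_PiM) (rule U.prob_space_axioms)
  interpret PR: pair_prob_space ?U "PiM UNIV (\<lambda>_. ?U)" by unfold_locales
  have f'[measurable]: "f \<in> borel_measurable (PiM UNIV (\<lambda>_. ?U))" using f by (simp add: hash_space_def)
  have "(\<integral>\<^sup>+h. f h \<partial>hash_space M) = (\<integral>\<^sup>+h. f h \<partial>distr (?U \<Otimes>\<^sub>M PiM UNIV (\<lambda>_. ?U)) (PiM UNIV (\<lambda>_. ?U)) (\<lambda>(s, \<omega>). case_nat s \<omega>))"
    unfolding hash_space_def S.PiM_iter ..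
  also have "\<dots> = (\<integral>\<^sup>+p. f (case_nat (fst p) (snd p)) \<partial>(?U \<Otimes>\<^sub>M PiM UNIV (\<lambda>_. ?U)))"
    by (subst nn_integral_distr) (auto simp: hash_space_def split_beta')
  also have "\<dots> = (\<integral>\<^sup>+x. (\<integral>\<^sup>+h. f (case_nat x h) \<partial>hash_space M) \<partial>?U)"
    using PP.nn_integral_fst[of "\<lambda>p. f (case_nat (fst p) (snd p))" ?U] unfolding hash_space_def by simp
  finally show ?thesis .
qed



context
  fixes phi :: "real \<Rightarrow> real" and M R Dc Ds :: real
begin

definition stp :: "nat \<times> real \<Rightarrow> real \<Rightarrow> nat \<times> real" where
  "stp s x = (case s of (n, S) \<Rightarrow>
      if x \<le> M * phi (R + S) / Dc
      then (Suc n, if x \<le> M * phi (R + S) / Ds then S + R else S)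
      else (n, S))"

fun st :: "nat \<times> real \<Rightarrow> (nat \<Rightarrow> real) \<Rightarrow> nat \<Rightarrow> nat \<times> real" where
  "st s h 0 = s"
| "st s h (Suc i) = st (stp s (h 0)) (\<lambda>j. h (Suc j)) i"

fun TT :: "nat \<Rightarrow> nat \<Rightarrow> real \<Rightarrow> (nat \<Rightarrow> real) \<Rightarrow> ennreal" where
  "TT 0 k S h = 0"
| "TT (Suc N) 0 S h = 0"
| "TT (Suc N) (Suc k) S h = 1 +
     (if h 0 \<le> M * phi (R + S) / Dc
      then (if h 0 \<le> M * phi (R + S) / Ds then TT N k (S + R) (\<lambda>j. h (Suc j))
            else TT N k S (\<lambda>j. h (Suc j)))
      else TT N (Suc k) S (\<lambda>j. h (Suc j)))"

lemma st_Suc': "st s h (Suc i) = stp (st s h i) (h i)"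
proof (induction i arbitrary: s h)
  case 0
  then show ?case by simp
next
  case (Suc i)
  have "st s h (Suc (Suc i)) = st (stp s (h 0)) (\<lambda>j. h (Suc j)) (Suc i)" by (simp only: st.simps)
  also have "\<dots> = stp (st (stp s (h 0)) (\<lambda>j. h (Suc j)) i) (h (Suc i))" by (simp only: Suc.IH)
  also have "\<dots> = stp (st s h (Suc i)) (h (Suc i))" by (simp only: st.simps)
  finally show ?case .
qed

lemma ms_st: "mining_state phi M R Dc Ds h i = st (0, 0) h i"
  by (induction i) (auto simp del: st.simps(2) simp: st_Suc' stp_def split: prod.split)

lemma stp_shift: "stp (n, S) x = (n + fst (stp (0, S) x), snd (stp (0, S) x))"
  by (simp add: stp_def)

lemma st_shift: "st (n, S) h i = (n + fst (st (0, S) h i), snd (st (0, S) h i))"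
proof (induction i arbitrary: n S h)
  case 0
  then show ?case by simp
next
  case (Suc i)
  obtain a b where ab: "stp (0, S) (h 0) = (a, b)" by force
  have "stp (n, S) (h 0) = (n + a, b)" using stp_shift[of n S "h 0"] ab by simp
  then show ?case using Suc[of "n + a" b] Suc[of a b] ab by simp
qed

lemma TT_sum: "TT N k S h = (\<Sum>i<N. if fst (st (0, S) h i) < k then 1 else 0)"
proof (induction N arbitrary: k S h)
  case 0
  then show ?case by simp
next
  case (Suc N)
  show ?case
  proof (cases k)
    case 0
    then show ?thesis by simp
  next
    case (Suc k')
    have split: "(\<Sum>i<Suc N. if fst (st (0, S) h i) < k then 1 else 0 :: ennreal)
       = 1 + (\<Sum>i<N. if fst (st (stp (0, S) (h 0)) (\<lambda>j. h (Suc j)) i) < k then 1 else 0)"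
      unfolding sum.lessThan_Suc_shift by (simp add: Suc)
    show ?thesis
    proof (cases "h 0 \<le> M * phi (R + S) / Dc")
      case True
      define S' where "S' = (if h 0 \<le> M * phi (R + S) / Ds then S + R else S)"
      have e: "stp (0, S) (h 0) = (1, S')" using True by (simp add: stp_def S'_def)
      have "fst (st (stp (0, S) (h 0)) (\<lambda>j. h (Suc j)) i) < k \<longleftrightarrow>
            fst (st (0, S') (\<lambda>j. h (Suc j)) i) < k'" for i
        unfolding e using st_shift[of 1 S' "\<lambda>j. h (Suc j)" i] Suc by simp
      then have "(\<Sum>i<Suc N. if fst (st (0, S) h i) < k then 1 else 0 :: ennreal)
        = 1 + TT N k' S' (\<lambda>j. h (Suc j))"
        unfolding split Suc.IH by simp
      then show ?thesis using True Suc by (simp add: S'_def)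
    next
      case False
      have e: "stp (0, S) (h 0) = (0, S)" using False by (simp add: stp_def)
      have "(\<Sum>i<Suc N. if fst (st (0, S) h i) < k then 1 else 0 :: ennreal)
        = 1 + TT N k S (\<lambda>j. h (Suc j))"
        unfolding split Suc.IH e by simp
      then show ?thesis using False Suc by simp
    qed
  qed
qed

lemma sum_min: "(\<Sum>i<N. if i < m then 1 else 0 :: ennreal) = of_nat (min N m)"
  by (induction N) (auto simp: min_def)

lemma sum_all: "(\<Sum>i<N. 1 :: ennreal) = of_nat N"
  by simp

lemma mining_time_SUP:
  "mining_time phi M R Dc Ds L h = (SUP N. TT N L 0 h)"
proof -
  define g where "g i = fst (mining_state phi M R Dc Ds h i)" for i
  have TTg: "TT N L 0 h = (\<Sum>i<N. if g i < L then 1 else 0)" for N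
    by (simp add: TT_sum g_def ms_st)
  have "g i \<le> g (Suc i)" for i
    by (auto simp: g_def split: prod.split)
  then have mono: "mono g" unfolding mono_iff_le_Suc by blast
  show ?thesis
  proof (cases "\<exists>i. L \<le> g i")
    case True
    define m where "m = (LEAST i. L \<le> g i)"
    have mt: "mining_time phi M R Dc Ds L h = of_nat m"
      using True by (simp add: mining_time_def m_def g_def)
    have Lm: "L \<le> g m" unfolding m_def using True by (rule LeastI_ex)
    have iff: "g i < L \<longleftrightarrow> i < m" for i
    proof
      assume "g i < L"
      then show "i < m" using Lm mono[THEN monoD, of m i] by (meson leI not_le order_trans)
    next
      assume "i < m"
      then show "g i < L" unfolding m_def using not_less_Least by (meson not_le)
    qed
    have "TT N L 0 h = of_nat (min N m)" for N
      unfolding TTg iff sum_min ..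
    moreover have "(SUP N. of_nat (min N m) :: ennreal) = of_nat m"
    proof (rule antisym)
      show "(SUP N. of_nat (min N m) :: ennreal) \<le> of_nat m"
        by (rule SUP_least) simp
      show "of_nat m \<le> (SUP N. of_nat (min N m) :: ennreal)"
        by (rule SUP_upper2[of m]) auto
    qed
    ultimately show ?thesis using mt by simp
  next
    case False
    then have "g i < L" for i by (simp add: not_le)
    then have "TT N L 0 h = of_nat N" for N unfolding TTg by simp
    then show ?thesis using False
      by (simp add: mining_time_def g_def ennreal_SUP_of_nat_eq_top)
  qed
qed

lemma TT_incseq: "incseq (\<lambda>N. TT N k S)"
  by (rule incseq_SucI) (simp add: le_fun_def TT_sum)

end


lemma shift_meas: "(\<lambda>h j. h (Suc j)) \<in> measurable (hash_space M) (hash_space M)"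
  unfolding hash_space_def by (intro measurable_PiM_single') (auto simp: space_PiM intro!: measurable_component_singleton)

lemma h0_meas: "(\<lambda>h. h 0) \<in> borel_measurable (hash_space M)"
  unfolding hash_space_def by measurable

lemma TT_meas: "TT phi M R Dc Ds N k S \<in> borel_measurable (hash_space M)"
proof (induction N arbitrary: k S)
  case 0
  then show ?case by simp
next
  case (Suc N)
  note IH = measurable_compose[OF shift_meas Suc.IH]
  note [measurable] = IH h0_meas
  show ?case
  proof (cases k)
    case 0
    then show ?thesis by simp
  next
    case (Suc k')
    have "TT phi M R Dc Ds (Suc N) k S = (\<lambda>h. 1 +
     (if h 0 \<le> M * phi (R + S) / Dc
      then (if h 0 \<le> M * phi (R + S) / Ds then TT phi M R Dc Ds N k' (S + R) (\<lambda>j. h (Suc j))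
            else TT phi M R Dc Ds N k' S (\<lambda>j. h (Suc j)))
      else TT phi M R Dc Ds N (Suc k') S (\<lambda>j. h (Suc j))))" (is "_ = ?f")
      using Suc by (simp add: fun_eq_iff)
    moreover have "?f \<in> borel_measurable (hash_space M)" by measurable
    ultimately show ?thesis by simp
  qed
qed



lemma U_emeas:
  assumes "M > 0" "0 \<le> a" "a \<le> b" "b \<le> M"
  shows "emeasure (uniform_measure lborel {0..M}) {..a} = ennreal (a / M)"
    "emeasure (uniform_measure lborel {0..M}) {a<..b} = ennreal ((b - a) / M)"
    "emeasure (uniform_measure lborel {0..M}) {b<..} = ennreal ((M - b) / M)"
proof -
  have "{0..M} \<inter> {..a} = {0..a}" "{0..M} \<inter> {a<..b} = {a<..b}" "{0..M} \<inter> {b<..} = {b<..M}"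
    using assms by auto
  then show "emeasure (uniform_measure lborel {0..M}) {..a} = ennreal (a / M)"
    "emeasure (uniform_measure lborel {0..M}) {a<..b} = ennreal ((b - a) / M)"
    "emeasure (uniform_measure lborel {0..M}) {b<..} = ennreal ((M - b) / M)"
    using assms by (simp_all add: divide_ennreal)
qed

lemma TT_step:
  assumes M: "M > 0" and Dc: "0 < Dc" "Dc \<le> Ds" and p: "0 < phi (R + S)" "phi (R + S) \<le> Dc"
  shows "(\<integral>\<^sup>+h. TT phi M R Dc Ds (Suc N) (Suc k) S h \<partial>hash_space M) =
     1 + ennreal (phi (R + S) / Ds) * (\<integral>\<^sup>+h. TT phi M R Dc Ds N k (S + R) h \<partial>hash_space M)
       + ennreal (phi (R + S) / Dc - phi (R + S) / Ds) * (\<integral>\<^sup>+h. TT phi M R Dc Ds N k S h \<partial>hash_space M)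
       + ennreal (1 - phi (R + S) / Dc) * (\<integral>\<^sup>+h. TT phi M R Dc Ds N (Suc k) S h \<partial>hash_space M)"
proof -
  let ?U = "uniform_measure lborel {0..M}"
  let ?H = "hash_space M"
  define a where "a = (\<integral>\<^sup>+h. TT phi M R Dc Ds N k (S + R) h \<partial>?H)"
  define b where "b = (\<integral>\<^sup>+h. TT phi M R Dc Ds N k S h \<partial>?H)"
  define c where "c = (\<integral>\<^sup>+h. TT phi M R Dc Ds N (Suc k) S h \<partial>?H)"
  define ts where "ts = M * phi (R + S) / Ds"
  define tc where "tc = M * phi (R + S) / Dc"
  have ts0: "0 \<le> ts" using M p Dc by (simp add: ts_def)
  have tstc: "ts \<le> tc" unfolding ts_def tc_def using M p Dc
    by (intro divide_left_mono mult_nonneg_nonneg mult_pos_pos) auto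
  have tcM: "tc \<le> M" unfolding tc_def using M p Dc by (simp add: field_simps)
  interpret H: prob_space ?H unfolding hash_space_def
    by (rule prob_space_PiM) (rule U_prob[OF M])
  note [measurable] = TT_meas
  have inner: "(\<integral>\<^sup>+h. TT phi M R Dc Ds (Suc N) (Suc k) S (case_nat x h) \<partial>?H) =
      1 + (if x \<le> tc then (if x \<le> ts then a else b) else c)" for x
  proof -
    have e: "(\<lambda>j. case_nat x h (Suc j)) = h" for h by (simp add: fun_eq_iff)
    have "(\<integral>\<^sup>+h. TT phi M R Dc Ds (Suc N) (Suc k) S (case_nat x h) \<partial>?H) =
       (\<integral>\<^sup>+h. 1 + (if x \<le> tc then (if x \<le> ts then TT phi M R Dc Ds N k (S + R) h
            else TT phi M R Dc Ds N k S h) else TT phi M R Dc Ds N (Suc k) S h) \<partial>?H)"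
      by (simp add: ts_def tc_def cong: if_cong)
    also have "\<dots> = 1 + (if x \<le> tc then (if x \<le> ts then a else b) else c)"
      by (cases "x \<le> tc"; cases "x \<le> ts")
        (simp_all add: nn_integral_add H.emeasure_space_1 a_def b_def c_def)
    finally show ?thesis .
  qed
  have "(\<integral>\<^sup>+h. TT phi M R Dc Ds (Suc N) (Suc k) S h \<partial>?H) =
     (\<integral>\<^sup>+x. (\<integral>\<^sup>+h. TT phi M R Dc Ds (Suc N) (Suc k) S (case_nat x h) \<partial>?H) \<partial>?U)"
    by (rule decomp[OF M TT_meas])
  also have "\<dots> = (\<integral>\<^sup>+x. 1 + a * indicator {..ts} x + b * indicator {ts<..tc} x
        + c * indicator {tc<..} x \<partial>?U)"
    unfolding inner using tstc
    by (intro nn_integral_cong) (auto simp: indicator_def)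
  also have "\<dots> = 1 + a * emeasure ?U {..ts} + b * emeasure ?U {ts<..tc} + c * emeasure ?U {tc<..}"
    using prob_space.emeasure_space_1[OF U_prob[OF M]]
    by (simp del: emeasure_uniform_measure add: nn_integral_add nn_integral_cmult_indicator)
  also have "\<dots> = 1 + a * ennreal (ts / M) + b * ennreal ((tc - ts) / M) + c * ennreal ((M - tc) / M)"
    using U_emeas[OF M ts0 tstc tcM] by simp
  finally have fin: "(\<integral>\<^sup>+h. TT phi M R Dc Ds (Suc N) (Suc k) S h \<partial>?H) = 1 + a * ennreal (ts / M) + b * ennreal ((tc - ts) / M) + c * ennreal ((M - tc) / M)" .
  have "ts / M = phi (R + S) / Ds" "(tc - ts) / M = phi (R + S) / Dc - phi (R + S) / Ds"
     "(M - tc) / M = 1 - phi (R + S) / Dc"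
    using M by (simp_all add: ts_def tc_def field_simps)
  then show ?thesis using fin by (simp add: a_def b_def c_def mult.commute)
qed



definition Bf :: "(real \<Rightarrow> real) \<Rightarrow> real \<Rightarrow> real \<Rightarrow> nat \<Rightarrow> real \<Rightarrow> real" where
  "Bf phi R Ds k S = Ds * (\<Sum>n<k. 1 / phi (R * real (Suc n) + S))"

lemma real_ineq:
  fixes p Dc Ds s ak :: real
  assumes "p > 0" "Dc > 0" "Dc \<le> Ds" "ak \<ge> 0"
  shows "1 + p / Ds * (Ds * s) + (p / Dc - p / Ds) * (Ds * (s + 1 / p - ak)) + (1 - p / Dc) * (Ds * (1 / p + s))
     \<le> Ds * (1 / p + s)"
proof -
  have eq: "1 + p / Ds * (Ds * s) + (p / Dc - p / Ds) * (Ds * (s + 1 / p - ak)) + (1 - p / Dc) * (Ds * (1 / p + s))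
     = Ds * (1 / p + s) - (Ds / Dc - 1) * p * ak"
    using assms by (simp add: field_simps)
  have nn: "(Ds / Dc - 1) * p * ak \<ge> 0"
    using assms by (intro mult_nonneg_nonneg) (auto simp: field_simps)
  show ?thesis unfolding eq using nn by simp
qed

lemma Bf_nonneg:
  assumes "Ds \<ge> 0" "\<forall>m<k. 0 < phi (R * real (Suc m) + S)"
  shows "Bf phi R Ds k S \<ge> 0"
  unfolding Bf_def using assms by (intro mult_nonneg_nonneg sum_nonneg) (auto simp: less_imp_le)

lemma TT_bound:
  assumes M: "M > 0" and Dc: "0 < Dc" "Dc \<le> Ds"
  shows "\<forall>k S. (\<forall>m<k. 0 < phi (R * real (Suc m) + S) \<and> phi (R * real (Suc m) + S) \<le> Dc) \<longrightarrow>
     (\<integral>\<^sup>+h. TT phi M R Dc Ds N k S h \<partial>hash_space M) \<le> ennreal (Bf phi R Ds k S)"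
proof (induction N)
  case 0
  then show ?case by simp
next
  case (Suc N)
  show ?case
  proof (intro allI impI)
    fix k S
    assume cond: "\<forall>m<k. 0 < phi (R * real (Suc m) + S) \<and> phi (R * real (Suc m) + S) \<le> Dc"
    show "(\<integral>\<^sup>+h. TT phi M R Dc Ds (Suc N) k S h \<partial>hash_space M) \<le> ennreal (Bf phi R Ds k S)"
    proof (cases k)
      case 0
      then show ?thesis by simp
    next
      case (Suc k')
      define p where "p = phi (R + S)"
      have p: "0 < p" "p \<le> Dc" using cond[rule_format, of 0] Suc by (auto simp: p_def)
      have condX: "\<forall>m<k'. 0 < phi (R * real (Suc m) + (S + R)) \<and> phi (R * real (Suc m) + (S + R)) \<le> Dc"
      proof (intro allI impI)
        fix m assume "m < k'"
        then have "Suc m < k" using Suc by simp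
        then have c: "0 < phi (R * real (Suc (Suc m)) + S) \<and> phi (R * real (Suc (Suc m)) + S) \<le> Dc"
          using cond by blast
        have eqm: "R * real (Suc m) + (S + R) = R * real (Suc (Suc m)) + S" by (simp add: algebra_simps)
        show "0 < phi (R * real (Suc m) + (S + R)) \<and> phi (R * real (Suc m) + (S + R)) \<le> Dc"
          unfolding eqm by (rule c)
      qed
      have condY: "\<forall>m<k'. 0 < phi (R * real (Suc m) + S) \<and> phi (R * real (Suc m) + S) \<le> Dc"
        using cond Suc by auto
      define f where "f n = 1 / phi (R * real (Suc n) + S)" for n
      define s where "s = (\<Sum>n<k'. f (Suc n))"
      have f0: "f 0 = 1 / p" by (simp add: f_def p_def)
      have fk: "f k' \<ge> 0" using cond Suc by (auto simp: f_def less_imp_le)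
      have Z: "Bf phi R Ds k S = Ds * (1 / p + s)"
        unfolding Bf_def Suc s_def f_def[symmetric] sum.lessThan_Suc_shift f0 ..
      have X: "Bf phi R Ds k' (S + R) = Ds * s"
        unfolding Bf_def s_def f_def
        by (intro arg_cong[where f="\<lambda>x. Ds * x"] sum.cong) (simp_all add: algebra_simps)
      have "(\<Sum>n<Suc k'. f n) = f 0 + s"
        unfolding s_def sum.lessThan_Suc_shift by simp
      moreover have "(\<Sum>n<Suc k'. f n) = (\<Sum>n<k'. f n) + f k'" by simp
      ultimately have "(\<Sum>n<k'. f n) = s + 1 / p - f k'" using f0 by simp
      then have Y: "Bf phi R Ds k' S = Ds * (s + 1 / p - f k')"
        unfolding Bf_def f_def[symmetric] by simp
      have Xn: "Bf phi R Ds k' (S + R) \<ge> 0" using condX Dc by (intro Bf_nonneg) auto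
      have Yn: "Bf phi R Ds k' S \<ge> 0" using condY Dc by (intro Bf_nonneg) auto
      have Zn: "Bf phi R Ds (Suc k') S \<ge> 0" using cond Dc Suc by (intro Bf_nonneg) auto
      have q1: "p / Ds \<ge> 0" using p Dc by simp
      have q2: "p / Dc - p / Ds \<ge> 0" using p Dc by (simp add: frac_le)
      have q3: "1 - p / Dc \<ge> 0" using p Dc by simp
      have iX: "(\<integral>\<^sup>+h. TT phi M R Dc Ds N k' (S + R) h \<partial>hash_space M) \<le> ennreal (Bf phi R Ds k' (S + R))"
        using Suc.IH condX by blast
      have iY: "(\<integral>\<^sup>+h. TT phi M R Dc Ds N k' S h \<partial>hash_space M) \<le> ennreal (Bf phi R Ds k' S)"
        using Suc.IH condY by blast
      have iZ: "(\<integral>\<^sup>+h. TT phi M R Dc Ds N (Suc k') S h \<partial>hash_space M) \<le> ennreal (Bf phi R Ds (Suc k') S)"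
        using Suc.IH cond \<open>k = Suc k'\<close> by blast
      have "(\<integral>\<^sup>+h. TT phi M R Dc Ds (Suc N) k S h \<partial>hash_space M) =
         1 + ennreal (p / Ds) * (\<integral>\<^sup>+h. TT phi M R Dc Ds N k' (S + R) h \<partial>hash_space M)
         + ennreal (p / Dc - p / Ds) * (\<integral>\<^sup>+h. TT phi M R Dc Ds N k' S h \<partial>hash_space M)
         + ennreal (1 - p / Dc) * (\<integral>\<^sup>+h. TT phi M R Dc Ds N (Suc k') S h \<partial>hash_space M)"
        unfolding Suc p_def by (rule TT_step[OF M Dc]) (use p in \<open>auto simp: p_def\<close>)
      also have "\<dots> \<le> 1 + ennreal (p / Ds) * ennreal (Bf phi R Ds k' (S + R))
         + ennreal (p / Dc - p / Ds) * ennreal (Bf phi R Ds k' S)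
         + ennreal (1 - p / Dc) * ennreal (Bf phi R Ds (Suc k') S)"
        using iX iY iZ by (intro add_mono mult_left_mono order_refl) auto
      also have "\<dots> = ennreal (1 + (p / Ds) * Bf phi R Ds k' (S + R)
         + (p / Dc - p / Ds) * Bf phi R Ds k' S + (1 - p / Dc) * Bf phi R Ds (Suc k') S)"
      proof -
        let ?A = "(p / Ds) * Bf phi R Ds k' (S + R)"
        let ?B = "(p / Dc - p / Ds) * Bf phi R Ds k' S"
        let ?C = "(1 - p / Dc) * Bf phi R Ds (Suc k') S"
        have A: "0 \<le> ?A" and B: "0 \<le> ?B" and C: "0 \<le> ?C"
          using Xn Yn Zn q1 q2 q3 by (intro mult_nonneg_nonneg; simp)+
        have "ennreal (1 + ?A + ?B + ?C) = ennreal (1 + ?A + ?B) + ennreal ?C"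
          using A B C by (intro ennreal_plus) auto
        also have "ennreal (1 + ?A + ?B) = ennreal (1 + ?A) + ennreal ?B"
          using A B C by (intro ennreal_plus) auto
        also have "ennreal (1 + ?A) = 1 + ennreal ?A"
          using A by (subst ennreal_plus) auto
        also have "ennreal ?A = ennreal (p / Ds) * ennreal (Bf phi R Ds k' (S + R))"
          using q1 Xn by (rule ennreal_mult)
        also have "ennreal ?B = ennreal (p / Dc - p / Ds) * ennreal (Bf phi R Ds k' S)"
          using q2 Yn by (rule ennreal_mult)
        also have "ennreal ?C = ennreal (1 - p / Dc) * ennreal (Bf phi R Ds (Suc k') S)"
          using q3 Zn by (rule ennreal_mult)
        finally show ?thesis by simp
      qed
      also have "\<dots> \<le> ennreal (Bf phi R Ds k S)"
        unfolding X Y using Z Suc real_ineq[OF p(1) Dc fk, of s]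
        by (intro ennreal_leI) simp
      finally show ?thesis .
    qed
  qed
qed


theorem mainTheorem10:
  fixes M R Dc Ds :: real and L :: nat
  assumes "M > 0" and "R \<ge> 2" and "0 < Dc" and "Dc \<le> Ds" and "L \<ge> 1"
    and "\<forall>k < L. 0 < log 2 (R + real k * R) \<and> log 2 (R + real k * R) \<le> Dc"
  shows "(\<integral>\<^sup>+ h. mining_time (log 2) M R Dc Ds L h \<partial>hash_space M)
           \<le> ennreal (Ds * (\<Sum>n<L. 1 / (log 2 (real n + 1) + log 2 R)))"
proof -
  have eqR: "R * real (Suc m) + 0 = R + real m * R" for m by (simp add: algebra_simps)
  have cond: "\<forall>m<L. 0 < log 2 (R * real (Suc m) + 0) \<and> log 2 (R * real (Suc m) + 0) \<le> Dc"
    using assms(6) unfolding eqR by blast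
  note [measurable] = TT_meas
  have "(\<integral>\<^sup>+ h. mining_time (log 2) M R Dc Ds L h \<partial>hash_space M)
      = (\<integral>\<^sup>+ h. (SUP N. TT (log 2) M R Dc Ds N L 0 h) \<partial>hash_space M)"
    by (simp add: mining_time_SUP)
  also have "\<dots> = (SUP N. \<integral>\<^sup>+ h. TT (log 2) M R Dc Ds N L 0 h \<partial>hash_space M)"
    by (rule nn_integral_monotone_convergence_SUP) (auto intro: TT_incseq)
  also have "\<dots> \<le> ennreal (Bf (log 2) R Ds L 0)"
    using TT_bound[OF assms(1) assms(3) assms(4), of "log 2" R] cond
    by (intro SUP_least) blast
  also have "Bf (log 2) R Ds L 0 = Ds * (\<Sum>n<L. 1 / (log 2 (real n + 1) + log 2 R))"
    unfolding Bf_def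
  proof (intro arg_cong[where f="\<lambda>x. Ds * x"] sum.cong refl)
    fix n assume "n \<in> {..<L}"
    have "R * real (Suc n) + 0 = (real n + 1) * R" by (simp add: algebra_simps)
    then show "1 / log 2 (R * real (Suc n) + 0) = 1 / (log 2 (real n + 1) + log 2 R)"
      using assms(2) by (simp add: log_mult_pos add.commute)
  qed
  finally show ?thesis .
qed

end
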